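(* Let $\mathbf{X}$ be an isotropic unimodal Lévy process on $\mathbb{R}^d$ with Lévy–Khintchine exponent $\psi$. There exist $c\in(0,1]$, $\alpha>0$ and $\theta\ge0$ such that $\psi\in\mathrm{WLSC}(\alpha,\theta,c)$ if and only if \[ \liminf_{r\to0^+}\frac{K_d(r)}{h(r)}>0. \] In particular, if this $\liminf$ is positive then $\psi$ is not slowly varying at infinity.
   Context: An isotropic unimodal Lévy process on $\mathbb{R}^d$ is a pure-jump Lévy process with $\mathbb{E}e^{i\langle\xi,X_t\rangle}=e^{-t\psi(\xi)}$, $\psi(\xi)=\int_{\mathbb{R}^d}(1-\cos\langle\xi,x\rangle)\nu(x)\,\mathrm{d}x$, $\nu$ radial and radially non-increasing; $\psi$ is radial and written $\psi(r)$. For $r>0$: $h(r)=\int_{\mathbb{R}^d}\min\{1,r^{-2}|y|^2\}\nu(y)\,\mathrm{d}y$, $K_d(r)=r^{-2}\int_{|y|\le r}|y|^2\nu(y)\,\mathrm{d}y$. A function $f:[0,\infty)\to[0,\infty)$ belongs to $\mathrm{WLSC}(\alpha,x_0,c)$ (weak lower scaling at infinity) if $f(\lambda x)\ge c\lambda^\alpha f(x)$ for all $\lambda>1$ and $x>x_0$. *)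

theory Defs
  imports "HOL-Analysis.Analysis"
begin

text \<open>A Levy density nu on a Euclidean space of dimension d = DIM('a) defining an
isotropic unimodal pure-jump Levy process: nonnegative, measurable, radial,
radially non-increasing (on the punctured space), satisfying the Levy condition,
and not identically zero (non-degenerate process).\<close>
definition isotropic_unimodal_levy_density :: "('a::euclidean_space \<Rightarrow> real) \<Rightarrow> bool" where
  "isotropic_unimodal_levy_density \<nu> \<longleftrightarrow>
     \<nu> \<in> borel_measurable lborel \<and>
     (\<forall>x. 0 \<le> \<nu> x) \<and>
     (\<forall>x y. norm x = norm y \<longrightarrow> \<nu> x = \<nu> y) \<and>
     (\<forall>x y. 0 < norm x \<longrightarrow> norm x \<le> norm y \<longrightarrow> \<nu> y \<le> \<nu> x) \<and>
     integrable lborel (\<lambda>y. min 1 (norm y ^ 2) * \<nu> y) \<and>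
     (\<exists>x. x \<noteq> 0 \<and> \<nu> x > 0)"

definition levy_exponent :: "('a::euclidean_space \<Rightarrow> real) \<Rightarrow> 'a \<Rightarrow> real" where
  "levy_exponent \<nu> \<xi> = (\<integral>x. (1 - cos (\<xi> \<bullet> x)) * \<nu> x \<partial>lborel)"

definition psi_radial :: "('a::euclidean_space \<Rightarrow> real) \<Rightarrow> real \<Rightarrow> real" where
  "psi_radial \<nu> r = levy_exponent \<nu> (r *\<^sub>R (SOME u. u \<in> (Basis :: 'a set)))"

definition h_fun :: "('a::euclidean_space \<Rightarrow> real) \<Rightarrow> real \<Rightarrow> real" where
  "h_fun \<nu> r = (\<integral>y. min 1 (norm y ^ 2 / r ^ 2) * \<nu> y \<partial>lborel)"

definition K_fun :: "('a::euclidean_space \<Rightarrow> real) \<Rightarrow> real \<Rightarrow> real" where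
  "K_fun \<nu> r = (\<integral>y. indicator (cball 0 r) y * (norm y ^ 2 * \<nu> y) \<partial>lborel) / r ^ 2"

definition WLSC :: "(real \<Rightarrow> real) \<Rightarrow> real \<Rightarrow> real \<Rightarrow> real \<Rightarrow> bool" where
  "WLSC f \<alpha> x0 c \<longleftrightarrow> (\<forall>t x. t > 1 \<longrightarrow> x > x0 \<longrightarrow> f (t * x) \<ge> c * t powr \<alpha> * f x)"

definition slowly_varying_at_infinity :: "(real \<Rightarrow> real) \<Rightarrow> bool" where
  "slowly_varying_at_infinity f \<longleftrightarrow>
     (\<forall>t>0. ((\<lambda>x. f (t * x) / f x) \<longlongrightarrow> 1) at_top)"

end

theory Submission
  imports Defs "HOL-Analysis.Analysis"
begin


lemma cos_lower4: "cos (t::real) \<le> 1 - t^2/2 + t^4/24"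
proof -
  obtain s where "cos t = (\<Sum>m<4. cos_coeff m * t ^ m) + (cos(s + 1/2 * real 4 * pi) / fact 4) * t ^ 4"
    using Maclaurin_cos_expansion[of t 4] by blast
  moreover have "(\<Sum>m<4. cos_coeff m * t ^ m) = 1 - t^2/2"
  proof -
    have "cos_coeff 0 = 1" "cos_coeff 1 = 0" "cos_coeff 2 = -1/2" "cos_coeff 3 = 0"
      by (simp_all add: cos_coeff_def)
    then show ?thesis by (simp add: lessThan_nat_numeral)
  qed
  moreover have "cos(s + 1/2 * real 4 * pi) \<le> 1" by simp
  moreover have "t^4 \<ge> 0" by simp
  ultimately show ?thesis
    using mult_right_mono[of "cos(s + 1/2 * real 4 * pi)" 1 "t^4"] by (simp add: fact_numeral)
qed

lemma one_minus_cos_le: "1 - cos (t::real) \<le> t^2/2"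
proof -
  have "cos t = 1 - 2 * sin (t/2) ^ 2" using cos_double_sin[of "t/2"] by simp
  moreover have "sin (t/2) ^ 2 \<le> (t/2)^2"
    using abs_sin_x_le_abs_x[of "t/2"] by (metis abs_ge_zero power2_abs power_mono)
  ultimately show ?thesis by (simp add: power_divide)
qed

lemma one_minus_cos_ge: assumes "\<bar>t\<bar> \<le> pi" shows "t^2/12 \<le> 1 - cos (t::real)"
proof -
  have "pi \<le> 3.15" using pi_approx by (simp add: abs_le_iff)
  then have "pi^2 \<le> 10" using pi_gt3 using power_mono[of pi "3.15" 2] pi_ge_zero by (simp add: power2_eq_square)
  have "t^2 \<le> pi^2" using assms by (metis abs_le_square_iff abs_of_nonneg pi_ge_zero)
  have "t^4 = t^2*t^2" by algebra
  have "t^2 * t^2 \<le> 10 * t^2" using \<open>t^2 \<le> pi^2\<close> \<open>pi^2 \<le> 10\<close> using mult_right_mono[of "t^2" 10 "t^2"] by simp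
  then show ?thesis using cos_lower4[of t] \<open>t^4 = _\<close> by linarith
qed



definition tauB :: "'a \<Rightarrow> 'a \<Rightarrow> 'a \<Rightarrow> 'a" where
  "tauB b e j = (if j = b then e else if j = e then b else j)"

definition swapB :: "'a::euclidean_space \<Rightarrow> 'a \<Rightarrow> 'a \<Rightarrow> 'a" where
  "swapB b e y = (\<Sum>j\<in>Basis. (y \<bullet> tauB b e j) *\<^sub>R j)"

lemma tauB_invol[simp]: "tauB b e (tauB b e j) = j"
  by (auto simp: tauB_def)

lemma tauB_Basis: "b \<in> Basis \<Longrightarrow> e \<in> Basis \<Longrightarrow> j \<in> Basis \<Longrightarrow> tauB b e j \<in> (Basis::'a::euclidean_space set)"
  by (auto simp: tauB_def)

lemma tauB_bij: "b \<in> Basis \<Longrightarrow> e \<in> Basis \<Longrightarrow> bij_betw (tauB b e) Basis (Basis::'a::euclidean_space set)"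
  by (rule bij_betwI[where g="tauB b e"]) (auto simp: tauB_Basis)

lemma swapB_inner: "j \<in> Basis \<Longrightarrow> swapB b e y \<bullet> j = y \<bullet> tauB b e j"
  unfolding swapB_def by (simp add: inner_sum_left inner_Basis if_distrib cong: if_cong)

lemma swapB_e: "b \<in> Basis \<Longrightarrow> e \<in> Basis \<Longrightarrow> swapB b e y \<bullet> e = y \<bullet> b"
  by (simp add: swapB_inner tauB_def)

lemma sum_tauB: assumes "b \<in> Basis" "e \<in> Basis"
  shows "(\<Sum>j\<in>Basis. f (tauB b e j)) = (\<Sum>j\<in>(Basis::'a::euclidean_space set). f j)"
  using sum.reindex_bij_betw[OF tauB_bij[OF assms], of f] by simp

lemma prod_tauB: assumes "b \<in> Basis" "e \<in> Basis"
  shows "(\<Prod>j\<in>Basis. f (tauB b e j)) = (\<Prod>j\<in>(Basis::'a::euclidean_space set). f j)"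
  using prod.reindex_bij_betw[OF tauB_bij[OF assms], of f] by simp

lemma ball_tauB: assumes "b \<in> Basis" "e \<in> Basis"
  shows "(\<forall>j\<in>Basis. P (tauB b e j)) \<longleftrightarrow> (\<forall>j\<in>(Basis::'a::euclidean_space set). P j)"
  using tauB_Basis[OF assms] tauB_invol by metis

lemma norm_swapB: assumes "b \<in> Basis" "e \<in> Basis"
  shows "norm (swapB b e y) = norm y"
proof -
  have "swapB b e y \<bullet> swapB b e y = (\<Sum>j\<in>Basis. (swapB b e y \<bullet> j) * (swapB b e y \<bullet> j))"
    by (rule euclidean_inner)
  also have "\<dots> = (\<Sum>j\<in>Basis. (y \<bullet> tauB b e j) * (y \<bullet> tauB b e j))"
    by (rule sum.cong) (simp_all add: swapB_inner)
  also have "\<dots> = (\<Sum>j\<in>Basis. (y \<bullet> j) * (y \<bullet> j))"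
    by (rule sum_tauB[OF assms])
  also have "\<dots> = y \<bullet> y"
    by (rule euclidean_inner[symmetric])
  finally show ?thesis by (simp add: norm_eq_sqrt_inner)
qed

lemma swapB_measurable[measurable]: "swapB b e \<in> borel_measurable borel"
proof -
  have "continuous_on UNIV (swapB b e)" unfolding swapB_def by (intro continuous_intros)
  then show ?thesis by (rule borel_measurable_continuous_onI)
qed

lemma distr_swapB: assumes "b \<in> Basis" "e \<in> Basis"
  shows "distr lborel borel (swapB b e) = (lborel :: 'a::euclidean_space measure)"
proof -
 have "lborel = distr lborel borel (swapB b e)"
 proof (rule lborel_eqI)
  fix l u :: 'a assume le: "\<And>j. j \<in> Basis \<Longrightarrow> l \<bullet> j \<le> u \<bullet> j"
  have pre: "swapB b e -` box l u = box (swapB b e l) (swapB b e u)"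
  proof (rule set_eqI)
    fix y
    have "y \<in> swapB b e -` box l u \<longleftrightarrow> (\<forall>j\<in>Basis. l \<bullet> j < y \<bullet> tauB b e j \<and> y \<bullet> tauB b e j < u \<bullet> j)"
      by (simp add: mem_box swapB_inner)
    also have "\<dots> \<longleftrightarrow> (\<forall>j\<in>Basis. l \<bullet> tauB b e j < y \<bullet> j \<and> y \<bullet> j < u \<bullet> tauB b e j)"
      using ball_tauB[OF assms, of "\<lambda>j. l \<bullet> j < y \<bullet> tauB b e j \<and> y \<bullet> tauB b e j < u \<bullet> j"] by simp
    also have "\<dots> \<longleftrightarrow> y \<in> box (swapB b e l) (swapB b e u)"
      by (simp add: mem_box swapB_inner)
    finally show "y \<in> swapB b e -` box l u \<longleftrightarrow> y \<in> box (swapB b e l) (swapB b e u)" .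
  qed
  have le2: "\<forall>j\<in>Basis. swapB b e l \<bullet> j \<le> swapB b e u \<bullet> j"
    using le tauB_Basis assms by (auto simp: swapB_inner)
  have "emeasure (distr lborel borel (swapB b e)) (box l u) = emeasure lborel (box (swapB b e l) (swapB b e u))"
    by (simp add: emeasure_distr pre)
  also have "\<dots> = (\<Prod>j\<in>Basis. (swapB b e u - swapB b e l) \<bullet> j)"
    using le2 by (simp add: emeasure_lborel_box_eq)
  also have "\<dots> = (\<Prod>j\<in>Basis. (u - l) \<bullet> tauB b e j)"
    by (intro arg_cong[where f=ennreal] prod.cong refl) (simp add: inner_diff_left swapB_inner)
  also have "\<dots> = (\<Prod>j\<in>Basis. (u - l) \<bullet> j)"
    using prod_tauB[OF assms, of "\<lambda>j. (u - l) \<bullet> j"] by simp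
  finally show "emeasure (distr lborel borel (swapB b e)) (box l u) = (\<Prod>j\<in>Basis. (u - l) \<bullet> j)" .
 qed simp
 then show ?thesis by (rule sym)
qed

lemma integral_swapB: fixes f :: "'a::euclidean_space \<Rightarrow> real" assumes "b \<in> Basis" "e \<in> Basis" and f[measurable]: "f \<in> borel_measurable borel"
  shows "(\<integral>y. f (swapB b e y) \<partial>lborel) = (\<integral>y. f y \<partial>lborel)"
proof -
  have "(\<integral>y. f y \<partial>lborel) = (\<integral>y. f y \<partial>(distr lborel borel (swapB b e)))"
    by (simp only: distr_swapB[OF assms(1,2)])
  also have "\<dots> = (\<integral>y. f (swapB b e y) \<partial>lborel)"
    by (rule integral_distr) auto
  finally show ?thesis by (rule sym)
qed

lemma integral_translate: fixes f :: "'a::euclidean_space \<Rightarrow> real"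
  assumes f[measurable]: "f \<in> borel_measurable borel"
  shows "(\<integral>y. f (c + y) \<partial>lborel) = (\<integral>y. f y \<partial>lborel)"
proof -
  have "(\<integral>y. f y \<partial>lborel) = (\<integral>y. f y \<partial>(distr lborel borel ((+) c)))"
    by (simp only: lborel_distr_plus)
  also have "\<dots> = (\<integral>y. f (c + y) \<partial>lborel)"
    by (rule integral_distr) auto
  finally show ?thesis by (rule sym)
qed

lemma integrable_translate: fixes f :: "'a::euclidean_space \<Rightarrow> real"
  assumes f[measurable]: "f \<in> borel_measurable borel" and i: "integrable lborel f"
  shows "integrable lborel (\<lambda>y. f (c + y))"
proof -
  have "integrable (distr lborel borel ((+) c)) f"
    using i by (simp only: lborel_distr_plus)
  then show ?thesis
    by (subst (asm) integrable_distr_eq) auto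
qed




definition eB :: "'a::euclidean_space" where "eB = (SOME u. u \<in> Basis)"

lemma eB_Basis: "eB \<in> Basis"
  unfolding eB_def using nonempty_Basis by (meson ex_in_conv someI_ex)

locale LD =
  fixes \<nu> :: "'a::euclidean_space \<Rightarrow> real"
  assumes LD: "isotropic_unimodal_levy_density \<nu>"
begin

lemma nu_meas': "\<nu> \<in> borel_measurable lborel"
  using LD unfolding isotropic_unimodal_levy_density_def by blast

lemma nu_meas[measurable]: "\<nu> \<in> borel_measurable borel"
  using nu_meas' measurable_cong_sets[OF sets_lborel refl] by blast

lemma nu_nonneg: "0 \<le> \<nu> x"
  using LD unfolding isotropic_unimodal_levy_density_def by blast

lemma nu_radial: "norm x = norm y \<Longrightarrow> \<nu> x = \<nu> y"
  using LD unfolding isotropic_unimodal_levy_density_def by blast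

lemma nu_mono: "0 < norm x \<Longrightarrow> norm x \<le> norm y \<Longrightarrow> \<nu> y \<le> \<nu> x"
  using LD unfolding isotropic_unimodal_levy_density_def by blast

lemma nu_int: "integrable lborel (\<lambda>y. min 1 (norm y ^ 2) * \<nu> y)"
  using LD unfolding isotropic_unimodal_levy_density_def by blast

lemma nu_pos: "\<exists>x. x \<noteq> 0 \<and> \<nu> x > 0"
  using LD unfolding isotropic_unimodal_levy_density_def by blast

definition D :: "real \<Rightarrow> 'a \<Rightarrow> real" where
  "D x y = min 1 (x^2 * norm y ^ 2) * \<nu> y"

lemma D_meas[measurable]: "D x \<in> borel_measurable borel"
  unfolding D_def by measurable

lemma D_nonneg: "0 \<le> D x y"
  unfolding D_def using nu_nonneg by simp

lemma min_scale: assumes "0 \<le> a" "0 \<le> c" shows "min 1 (c * a) \<le> max 1 c * min 1 (a::real)"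
proof (cases "a \<le> 1")
  case True
  show ?thesis
  proof (cases "c \<le> 1")
    case True
    then have "c * a \<le> a" using assms mult_left_le_one_le by blast
    then show ?thesis using True \<open>a \<le> 1\<close> by simp
  next
    case False
    then show ?thesis using \<open>a \<le> 1\<close> by simp
  qed
next
  case False
  then show ?thesis by simp
qed

lemma D_int: "integrable lborel (D x)"
proof (rule Bochner_Integration.integrable_bound[where f="\<lambda>y. max 1 (x^2) * (min 1 (norm y ^ 2) * \<nu> y)"])
  show "integrable lborel (\<lambda>y. max 1 (x^2) * (min 1 (norm y ^ 2) * \<nu> y))"
    using nu_int by simp
  show "D x \<in> borel_measurable lborel" by simp
  show "AE y in lborel. norm (D x y) \<le> norm (max 1 (x^2) * (min 1 (norm y ^ 2) * \<nu> y))"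
  proof (rule AE_I2)
    fix y :: 'a
    have "min 1 (x^2 * norm y ^ 2) \<le> max 1 (x^2) * min 1 (norm y ^ 2)"
      by (rule min_scale) simp_all
    then have "D x y \<le> max 1 (x^2) * (min 1 (norm y ^ 2) * \<nu> y)"
      unfolding D_def using nu_nonneg[of y] mult_right_mono by (metis mult.assoc)
    then show "norm (D x y) \<le> norm (max 1 (x^2) * (min 1 (norm y ^ 2) * \<nu> y))"
      using D_nonneg[of x y] by simp
  qed
qed

lemma int_dom:
  assumes [measurable]: "f \<in> borel_measurable borel" and b: "\<And>y. \<bar>f y\<bar> \<le> C * D x y"
  shows "integrable lborel f"
proof (rule Bochner_Integration.integrable_bound[where f="\<lambda>y. C * D x y"])
  show "integrable lborel (\<lambda>y. C * D x y)" using D_int by simp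
  show "f \<in> borel_measurable lborel" by simp
  show "AE y in lborel. norm (f y) \<le> norm (C * D x y)"
    using b by (auto intro!: AE_I2 intro: order_trans[OF _ abs_ge_self])
qed

end



context LD begin

definition g :: "real \<Rightarrow> 'a \<Rightarrow> real" where
  "g x y = (1 - cos (x * (eB \<bullet> y))) * \<nu> y"

lemma g_meas[measurable]: "g x \<in> borel_measurable borel"
  unfolding g_def by measurable

lemma phi_eq: "psi_radial \<nu> x = (\<integral>y. g x y \<partial>lborel)"
  unfolding psi_radial_def levy_exponent_def g_def eB_def[symmetric]
  by (simp add: inner_scaleR_left)

lemma inner_eB_sq: "(eB \<bullet> y)^2 \<le> norm y ^ 2"
proof -
  have "\<bar>y \<bullet> eB\<bar> \<le> norm y" using Basis_le_norm[OF eB_Basis] by blast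
  then show ?thesis by (metis abs_ge_zero inner_commute power2_abs power_mono)
qed

lemma g_nonneg: "0 \<le> g x y"
  unfolding g_def using nu_nonneg[of y] cos_le_one[of "x * (eB \<bullet> y)"] by simp

lemma one_minus_cos_le2: "1 - cos (t::real) \<le> 2 * min 1 (t^2)"
proof -
  have a: "1 - cos t \<le> t^2/2" by (rule one_minus_cos_le)
  have b: "1 - cos t \<le> 2" using cos_ge_minus_one[of t] by simp
  have c: "0 \<le> t^2" by simp
  show ?thesis
  proof (cases "t^2 \<le> 1")
    case True
    then have "min 1 (t^2) = t^2" by simp
    then show ?thesis using a c by linarith
  next
    case False
    then have "min 1 (t^2) = 1" by simp
    then show ?thesis using b by linarith
  qed
qed

lemma g_le_D: "g x y \<le> 2 * D x y"
proof -
  have "(x * (eB \<bullet> y))^2 \<le> x^2 * norm y ^ 2"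
    using inner_eB_sq[of y] by (simp add: power_mult_distrib mult_left_mono)
  then have "min 1 ((x * (eB \<bullet> y))^2) \<le> min 1 (x^2 * norm y ^ 2)" by simp
  then have "1 - cos (x * (eB \<bullet> y)) \<le> 2 * min 1 (x^2 * norm y ^ 2)"
    using one_minus_cos_le2[of "x * (eB \<bullet> y)"] by linarith
  then have "(1 - cos (x * (eB \<bullet> y))) * \<nu> y \<le> (2 * min 1 (x^2 * norm y ^ 2)) * \<nu> y"
    by (rule mult_right_mono[OF _ nu_nonneg])
  then show ?thesis
    unfolding g_def D_def by (simp add: mult.assoc)
qed

lemma g_int: "integrable lborel (g x)"
  by (rule int_dom[where C=2 and x=x]) (use g_nonneg g_le_D in auto)

lemma phi_nonneg: "0 \<le> psi_radial \<nu> x"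
  unfolding phi_eq by (rule integral_nonneg_AE) (simp add: g_nonneg)

lemma phi_upper: "psi_radial \<nu> x \<le> 2 * (\<integral>y. D x y \<partial>lborel)"
proof -
  have "psi_radial \<nu> x \<le> (\<integral>y. 2 * D x y \<partial>lborel)"
    unfolding phi_eq by (rule integral_mono) (auto simp: g_int D_int g_le_D)
  then show ?thesis by simp
qed

lemma cos_shift: assumes "\<sigma> = 1 \<or> \<sigma> = -1" shows "cos (a - \<sigma> * pi) = - cos a"
  using assms by (auto simp: cos_diff)

lemma TL:
  assumes x: "x > 0" and s: "\<sigma> = 1 \<or> \<sigma> = (-1::real)"
  shows "(\<integral>y. indicator {y. pi \<le> \<sigma> * (x * (eB \<bullet> y))} y * \<nu> y \<partial>lborel) \<le> psi_radial \<nu> x"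
proof -
  define w :: 'a where "w = (\<sigma> * pi / x) *\<^sub>R eB"
  have ss: "\<sigma> * \<sigma> = 1" using s by auto
  have eBe: "(eB::'a) \<bullet> eB = 1" using eB_Basis inner_Basis by metis
  have pw: "indicator {y. pi \<le> \<sigma> * (x * (eB \<bullet> y))} y * \<nu> y \<le> g x y / 2 + g x (-w + y) / 2"
    if yw: "y \<noteq> w" for y
  proof (cases "pi \<le> \<sigma> * (x * (eB \<bullet> y))")
    case False
    then show ?thesis using g_nonneg[of x y] g_nonneg[of x "-w+y"] by simp
  next
    case True
    define z where "z = -w + y"
    have ez: "x * (eB \<bullet> z) = x * (eB \<bullet> y) - \<sigma> * pi"
      unfolding z_def w_def using x by (simp add: inner_add_right algebra_simps eBe)
    have cz: "cos (x * (eB \<bullet> z)) = - cos (x * (eB \<bullet> y))"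
      unfolding ez by (rule cos_shift[OF s])
    have wy: "w \<bullet> y = (pi / x^2) * (\<sigma> * (x * (eB \<bullet> y)))"
      using x unfolding w_def by (simp add: inner_commute field_simps power2_eq_square)
    have s2: "\<sigma>^2 = 1" using ss by (simp add: power2_eq_square)
    have "w \<bullet> w = (\<sigma> * pi / x)^2 * ((eB::'a) \<bullet> eB)"
      unfolding w_def by (simp add: power2_eq_square inner_commute)
    also have "\<dots> = pi^2 / x^2" using s2 eBe by (simp add: power_divide power_mult_distrib)
    finally have ww: "w \<bullet> w = pi^2 / x^2" .
    have "pi * pi \<le> pi * (\<sigma> * (x * (eB \<bullet> y)))"
      using True pi_gt_zero by (intro mult_left_mono) auto
    then have "pi^2/x^2 \<le> w \<bullet> y"
      unfolding wy using x by (simp add: field_simps power2_eq_square)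
    then have "z \<bullet> z \<le> y \<bullet> y"
    proof -
      have "z = y - w" unfolding z_def by simp
      then have "z \<bullet> z = y \<bullet> y - 2 * (w \<bullet> y) + w \<bullet> w"
        by (simp add: inner_diff_left inner_diff_right inner_commute)
      moreover have "0 \<le> pi^2/x^2" by simp
      ultimately show ?thesis using ww \<open>pi^2/x^2 \<le> w \<bullet> y\<close> by linarith
    qed
    then have nz: "norm z \<le> norm y" by (simp add: norm_le)
    have "z \<noteq> 0" unfolding z_def using yw by (simp add: neg_eq_iff_add_eq_0[symmetric] add_eq_0_iff2)
    then have "\<nu> y \<le> \<nu> z" using nu_mono[OF _ nz] by simp
    have c1: "0 \<le> 1 + cos (x * (eB \<bullet> y))" using cos_ge_minus_one[of "x * ((eB::'a) \<bullet> y)"] by linarith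
    have "2 * \<nu> y = (1 - cos (x * (eB \<bullet> y))) * \<nu> y + (1 + cos (x * (eB \<bullet> y))) * \<nu> y"
      by algebra
    also have "\<dots> \<le> (1 - cos (x * (eB \<bullet> y))) * \<nu> y + (1 + cos (x * (eB \<bullet> y))) * \<nu> z"
      using c1 \<open>\<nu> y \<le> \<nu> z\<close> by (simp add: mult_left_mono)
    also have "\<dots> = g x y + g x z" unfolding g_def cz by simp
    finally show ?thesis using True unfolding z_def by simp
  qed
  have int2: "integrable lborel (\<lambda>y. g x (-w + y))"
    by (rule integrable_translate) (simp_all add: g_int)
  have "(\<integral>y. indicator {y. pi \<le> \<sigma> * (x * (eB \<bullet> y))} y * \<nu> y \<partial>lborel)
      \<le> (\<integral>y. g x y / 2 + g x (-w + y) / 2 \<partial>lborel)"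
  proof (rule integral_mono_AE')
    show "integrable lborel (\<lambda>y. g x y / 2 + g x (-w + y) / 2)"
      using g_int int2 by simp
    show "AE y in lborel. indicator {y. pi \<le> \<sigma> * (x * (eB \<bullet> y))} y * \<nu> y \<le> g x y / 2 + g x (-w + y) / 2"
      using AE_lborel_singleton[of w] by eventually_elim (use pw in auto)
    show "AE y in lborel. 0 \<le> g x y / 2 + g x (-w + y) / 2"
      using g_nonneg by (simp add: add_nonneg_nonneg)
  qed
  also have "\<dots> = (\<integral>y. g x y \<partial>lborel) / 2 + (\<integral>y. g x (-w + y) \<partial>lborel) / 2"
    using g_int int2 by simp
  also have "(\<integral>y. g x (-w + y) \<partial>lborel) = (\<integral>y. g x y \<partial>lborel)"
    by (rule integral_translate) simp
  finally show ?thesis unfolding phi_eq by simp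
qed

end



lemma omc2: "1 - cos (t::real) \<le> 2 * min 1 (t^2)"
proof -
  have a: "1 - cos t \<le> t^2/2" by (rule one_minus_cos_le)
  have b: "1 - cos t \<le> 2" using cos_ge_minus_one[of t] by simp
  have c: "0 \<le> t^2" by simp
  show ?thesis
  proof (cases "t^2 \<le> 1")
    case True
    then have "min 1 (t^2) = t^2" by simp
    then show ?thesis using a c by linarith
  next
    case False
    then have "min 1 (t^2) = 1" by simp
    then show ?thesis using b by linarith
  qed
qed

definition Gf :: "real \<Rightarrow> real \<Rightarrow> real" where
  "Gf n a = (if \<bar>a\<bar> < pi then 12 * n * (1 - cos a) else 1)"

lemma Gf_nonneg: "0 \<le> n \<Longrightarrow> 0 \<le> Gf n a"
  unfolding Gf_def using cos_le_one[of a] by simp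

lemma Gf_ge_sq: "1 \<le> n \<Longrightarrow> \<bar>a\<bar> \<le> 1 \<Longrightarrow> a^2 \<le> Gf n a"
proof -
  assume n: "1 \<le> n" and a: "\<bar>a\<bar> \<le> 1"
  have "\<bar>a\<bar> < pi" using a pi_gt3 by linarith
  then have "a^2/12 \<le> 1 - cos a" using one_minus_cos_ge[of a] by simp
  then have "12 * n * (a^2/12) \<le> 12 * n * (1 - cos a)" using n by (intro mult_left_mono) auto
  moreover have "a^2 \<le> n * a^2" using n by (simp add: mult_le_cancel_right1)
  ultimately show ?thesis unfolding Gf_def using \<open>\<bar>a\<bar> < pi\<close> by simp
qed

lemma Gf_ge_1: "0 < n \<Longrightarrow> 1 / n < a^2 \<Longrightarrow> 1 \<le> Gf n a"
proof -
  assume n: "0 < n" and a: "1 / n < a^2"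
  show ?thesis
  proof (cases "\<bar>a\<bar> < pi")
    case True
    then have "a^2/12 \<le> 1 - cos a" using one_minus_cos_ge[of a] by simp
    then have "12 * n * (a^2/12) \<le> 12 * n * (1 - cos a)" using n by (intro mult_left_mono) auto
    moreover have "1 < n * a^2" using a n by (simp add: field_simps)
    ultimately show ?thesis unfolding Gf_def using True by simp
  next
    case False
    then show ?thesis unfolding Gf_def by simp
  qed
qed

lemma Gf_le: assumes "0 \<le> n" shows "Gf n a \<le> (24 * n + 1) * min 1 (a^2)"
proof (cases "\<bar>a\<bar> < pi")
  case True
  have "1 - cos a \<le> 2 * min 1 (a^2)" by (rule omc2)
  then have "12 * n * (1 - cos a) \<le> 12 * n * (2 * min 1 (a^2))" using assms by (intro mult_left_mono) auto
  moreover have "0 \<le> min 1 (a^2)" by simp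
  moreover have "12 * n * (2 * min 1 (a^2)) \<le> (24 * n + 1) * min 1 (a^2)"
    using \<open>0 \<le> min 1 (a^2)\<close> by (simp add: algebra_simps)
  ultimately show ?thesis unfolding Gf_def using True by simp
next
  case False
  then have "pi \<le> \<bar>a\<bar>" by simp
  then have "1 \<le> \<bar>a\<bar>" using pi_gt3 by linarith
  then have "1 \<le> \<bar>a\<bar>^2" by (rule one_le_power)
  then have "1 \<le> a^2" by simp
  then show ?thesis unfolding Gf_def using False assms by simp
qed




context LD begin

lemma sumsq: "norm (y::'a) ^ 2 = (\<Sum>b\<in>Basis. (b \<bullet> y)^2)"
  unfolding power2_norm_eq_inner using euclidean_inner[of y y]
  by (simp add: power2_eq_square inner_commute)

lemma P1: "min 1 (x^2 * norm (y::'a) ^ 2) \<le> (\<Sum>b\<in>Basis. Gf (real DIM('a)) (x * (b \<bullet> y)))"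
proof -
  define n where "n = real DIM('a)"
  have n1: "1 \<le> n" unfolding n_def by simp
  define a where "a b = x * (b \<bullet> y)" for b :: 'a
  have S: "x^2 * norm y ^ 2 = (\<Sum>b\<in>Basis. (a b)^2)"
    unfolding sumsq a_def by (simp add: sum_distrib_left power_mult_distrib)
  have Gnn: "\<And>b. 0 \<le> Gf n (a b)" using Gf_nonneg n1 by simp
  show ?thesis
  proof (cases "x^2 * norm y ^ 2 \<le> 1")
    case True
    have "(\<Sum>b\<in>Basis. (a b)^2) \<le> (\<Sum>b\<in>Basis. Gf n (a b))"
    proof (rule sum_mono)
      fix b :: 'a assume b: "b \<in> Basis"
      have "(a b)^2 \<le> (\<Sum>b\<in>Basis. (a b)^2)"
        using b by (intro member_le_sum) auto
      then have "(a b)^2 \<le> 1" using True S by linarith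
      then have "\<bar>a b\<bar> \<le> 1" by (simp add: abs_square_le_1)
      then show "(a b)^2 \<le> Gf n (a b)" using Gf_ge_sq n1 by blast
    qed
    then show ?thesis using S unfolding n_def a_def by simp
  next
    case False
    have "\<exists>b\<in>Basis. 1 / n < (a b)^2"
    proof (rule ccontr)
      assume "\<not> ?thesis"
      then have "\<And>b. b \<in> Basis \<Longrightarrow> (a b)^2 \<le> 1 / n" by auto
      then have "(\<Sum>b\<in>Basis. (a b)^2) \<le> of_nat (card (Basis::'a set)) * (1 / n)"
        by (rule sum_bounded_above)
      also have "\<dots> = 1" unfolding n_def by simp
      finally show False using False S by linarith
    qed
    then obtain b where b: "b \<in> Basis" "1 / n < (a b)^2" by blast
    have "1 \<le> Gf n (a b)" using Gf_ge_1 b n1 by simp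
    also have "\<dots> \<le> (\<Sum>b\<in>Basis. Gf n (a b))"
      using b Gnn by (intro member_le_sum) auto
    finally show ?thesis unfolding n_def a_def by simp
  qed
qed

definition Gi :: "real \<Rightarrow> 'a \<Rightarrow> 'a \<Rightarrow> real" where
  "Gi x b y = Gf (real DIM('a)) (x * (b \<bullet> y)) * \<nu> y"

lemma Gi_meas[measurable]: "Gi x b \<in> borel_measurable borel"
  unfolding Gi_def Gf_def by measurable

lemma Gi_int: assumes b: "b \<in> Basis" shows "integrable lborel (Gi x b)"
proof (rule int_dom[where C="24 * real DIM('a) + 1" and x=x])
  fix y :: 'a
  have "\<bar>y \<bullet> b\<bar> \<le> norm y" using Basis_le_norm[OF b] by blast
  then have "(b \<bullet> y)^2 \<le> norm y ^ 2" by (metis abs_ge_zero inner_commute power2_abs power_mono)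
  then have "(x * (b \<bullet> y))^2 \<le> x^2 * norm y ^ 2"
    by (simp add: power_mult_distrib mult_left_mono)
  then have m: "min 1 ((x * (b \<bullet> y))^2) \<le> min 1 (x^2 * norm y ^ 2)" by simp
  have "Gf (real DIM('a)) (x * (b \<bullet> y)) \<le> (24 * real DIM('a) + 1) * min 1 ((x * (b \<bullet> y))^2)"
    by (rule Gf_le) simp
  also have "\<dots> \<le> (24 * real DIM('a) + 1) * min 1 (x^2 * norm y ^ 2)"
    using m by (intro mult_left_mono) auto
  finally have "Gi x b y \<le> ((24 * real DIM('a) + 1) * min 1 (x^2 * norm y ^ 2)) * \<nu> y"
    unfolding Gi_def by (rule mult_right_mono[OF _ nu_nonneg])
  moreover have "0 \<le> Gi x b y" unfolding Gi_def using Gf_nonneg[of "real DIM('a)"] nu_nonneg by simp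
  ultimately show "\<bar>Gi x b y\<bar> \<le> (24 * real DIM('a) + 1) * D x y"
    unfolding D_def by (simp add: mult.assoc)
qed simp

lemma Gi_swap: assumes b: "b \<in> Basis"
  shows "(\<integral>y. Gi x b y \<partial>lborel) = (\<integral>y. Gi x eB y \<partial>lborel)"
proof -
  have "Gi x eB (swapB b eB y) = Gi x b y" for y
  proof -
    have "eB \<bullet> swapB b eB y = b \<bullet> y"
      using swapB_e[OF b eB_Basis, of y] by (simp add: inner_commute)
    moreover have "\<nu> (swapB b eB y) = \<nu> y"
      by (rule nu_radial) (rule norm_swapB[OF b eB_Basis])
    ultimately show ?thesis unfolding Gi_def by simp
  qed
  then have "(\<integral>y. Gi x b y \<partial>lborel) = (\<integral>y. Gi x eB (swapB b eB y) \<partial>lborel)" by simp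
  also have "\<dots> = (\<integral>y. Gi x eB y \<partial>lborel)"
    by (rule integral_swapB[OF b eB_Basis]) simp
  finally show ?thesis .
qed

end



context LD begin

lemma ind_int: assumes x: "x > 0" and that: "\<sigma> = 1 \<or> \<sigma> = (-1::real)"
  shows "integrable lborel (\<lambda>y. indicator {y. pi \<le> \<sigma> * (x * (eB \<bullet> y))} y * \<nu> y)"
proof (rule int_dom[where C=1 and x=x])
  show "(\<lambda>y. indicator {y. pi \<le> \<sigma> * (x * (eB \<bullet> y))} y * \<nu> y) \<in> borel_measurable borel"
    by measurable
  fix y :: 'a
  show "\<bar>indicator {y. pi \<le> \<sigma> * (x * (eB \<bullet> y))} y * \<nu> y\<bar> \<le> 1 * D x y"
  proof (cases "pi \<le> \<sigma> * (x * (eB \<bullet> y))")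
    case True
    then have "pi \<le> \<bar>x * (eB \<bullet> y)\<bar>" using that by auto
    then have "1 \<le> \<bar>x * (eB \<bullet> y)\<bar>" using pi_gt3 by linarith
    then have "1 \<le> \<bar>x * (eB \<bullet> y)\<bar>^2" by (rule one_le_power)
    also have "\<dots> \<le> x^2 * norm y ^ 2"
      using inner_eB_sq[of y] by (simp add: power_mult_distrib mult_left_mono)
    finally have "min 1 (x^2 * norm y ^ 2) = 1" by simp
    then show ?thesis using True nu_nonneg[of y] unfolding D_def by simp
  next
    case False
    then show ?thesis using D_nonneg[of x y] by simp
  qed
qed

lemma LB: assumes x: "x > 0"
  shows "(\<integral>y. D x y \<partial>lborel) \<le> real DIM('a) * (12 * real DIM('a) + 2) * psi_radial \<nu> x"
proof -
  define n where "n = real DIM('a)"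
  have n1: "1 \<le> n" unfolding n_def by simp
  define I1 where "I1 = (\<lambda>y. indicator {y. pi \<le> 1 * (x * (eB \<bullet> y))} y * \<nu> y)"
  define I2 where "I2 = (\<lambda>y. indicator {y. pi \<le> (-1) * (x * (eB \<bullet> y))} y * \<nu> y)"
  have iI1: "integrable lborel I1" unfolding I1_def by (rule ind_int[OF x]) simp
  have iI2: "integrable lborel I2" unfolding I2_def by (rule ind_int[OF x]) simp
  have TL1: "integral\<^sup>L lborel I1 \<le> psi_radial \<nu> x" unfolding I1_def by (rule TL[OF x]) simp
  have TL2: "integral\<^sup>L lborel I2 \<le> psi_radial \<nu> x" unfolding I2_def by (rule TL[OF x]) simp
  have "(\<integral>y. D x y \<partial>lborel) \<le> (\<integral>y. (\<Sum>b\<in>Basis. Gi x b y) \<partial>lborel)"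
  proof (rule integral_mono)
    show "integrable lborel (D x)" by (rule D_int)
    show "integrable lborel (\<lambda>y. \<Sum>b\<in>Basis. Gi x b y)"
      by (rule Bochner_Integration.integrable_sum) (rule Gi_int)
    fix y :: 'a
    have "D x y \<le> (\<Sum>b\<in>Basis. Gf (real DIM('a)) (x * (b \<bullet> y))) * \<nu> y"
      unfolding D_def by (rule mult_right_mono[OF P1 nu_nonneg])
    then show "D x y \<le> (\<Sum>b\<in>Basis. Gi x b y)"
      unfolding Gi_def by (simp add: sum_distrib_right)
  qed
  also have "\<dots> = (\<Sum>b\<in>Basis. (\<integral>y. Gi x b y \<partial>lborel))"
    by (rule Bochner_Integration.integral_sum) (rule Gi_int)
  also have "\<dots> = (\<Sum>b\<in>(Basis::'a set). (\<integral>y. Gi x eB y \<partial>lborel))"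
    by (rule sum.cong) (simp_all add: Gi_swap)
  also have "\<dots> = n * (\<integral>y. Gi x eB y \<partial>lborel)" unfolding n_def by simp
  also have "(\<integral>y. Gi x eB y \<partial>lborel) \<le> (\<integral>y. 12 * n * g x y + I1 y + I2 y \<partial>lborel)"
  proof (rule integral_mono)
    show "integrable lborel (Gi x eB)" by (rule Gi_int[OF eB_Basis])
    show "integrable lborel (\<lambda>y. 12 * n * g x y + I1 y + I2 y)"
      using g_int iI1 iI2 by simp
    fix y :: 'a
    show "Gi x eB y \<le> 12 * n * g x y + I1 y + I2 y"
    proof (cases "\<bar>x * (eB \<bullet> y)\<bar> < pi")
      case True
      then have "Gi x eB y = 12 * n * g x y" unfolding Gi_def Gf_def g_def n_def by simp
      moreover have "0 \<le> I1 y" "0 \<le> I2 y" unfolding I1_def I2_def using nu_nonneg by auto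
      ultimately show ?thesis by simp
    next
      case False
      then have "Gi x eB y = \<nu> y" unfolding Gi_def Gf_def by simp
      moreover have "\<nu> y \<le> I1 y + I2 y" unfolding I1_def I2_def using False nu_nonneg[of y]
        by (auto simp: abs_if split: if_splits)
      moreover have "0 \<le> g x y" by (rule g_nonneg)
      moreover have "0 \<le> n" using n1 by simp
      ultimately show ?thesis by (smt (verit) mult_nonneg_nonneg)
    qed
  qed
  also have "(\<integral>y. 12 * n * g x y + I1 y + I2 y \<partial>lborel) = 12 * n * psi_radial \<nu> x + integral\<^sup>L lborel I1 + integral\<^sup>L lborel I2"
    using g_int iI1 iI2 by (simp add: phi_eq)
  finally have "(\<integral>y. D x y \<partial>lborel) \<le> n * (12 * n * psi_radial \<nu> x + integral\<^sup>L lborel I1 + integral\<^sup>L lborel I2)"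
    using n1 by (simp add: mult_left_mono)
  also have "\<dots> \<le> n * (12 * n * psi_radial \<nu> x + psi_radial \<nu> x + psi_radial \<nu> x)"
    using TL1 TL2 n1 by (intro mult_left_mono) auto
  finally show ?thesis unfolding n_def by (simp add: algebra_simps)
qed

end



lemma pw_H3: assumes "0 < s" "s \<le> r" "0 \<le> (a::real)"
  shows "min 1 (a / r^2) + (1 / s^2 - 1 / r^2) * ((if a \<le> s^2 then 1 else 0) * a) \<le> min 1 (a / s^2)"
proof (cases "a \<le> s^2")
  case True
  have "s^2 \<le> r^2" using assms by (simp add: power_mono)
  have "a / s^2 \<le> 1" using True assms by simp
  have "a / r^2 \<le> a / s^2" using assms \<open>s^2 \<le> r^2\<close> by (simp add: divide_left_mono)
  then have "a / r^2 \<le> 1" using \<open>a / s^2 \<le> 1\<close> by simp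
  then show ?thesis using True \<open>a / s^2 \<le> 1\<close> by (simp add: algebra_simps)
next
  case False
  then have "1 < a / s^2" using assms by simp
  then show ?thesis using False by simp
qed

lemma pw_H4: assumes "0 < s" "s \<le> r" "0 \<le> (a::real)"
  shows "min 1 (a / s^2) \<le> min 1 (a / r^2) + 2 / s^2 * ((if a \<le> r^2 then 1 else 0) * a)"
proof -
  have sr: "s^2 \<le> r^2" using assms by (simp add: power_mono)
  have p: "0 \<le> 2 / s^2 * a" using assms by simp
  show ?thesis
  proof (cases "a \<le> s^2")
    case True
    have "a / s^2 \<le> a / r^2 + 2 / s^2 * a"
      using assms by (simp add: field_simps)
    moreover have "0 \<le> a / s^2" using assms by simp
    ultimately show ?thesis using True sr by (auto simp: min_def)
  next
    case False
    show ?thesis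
    proof (cases "a \<le> r^2")
      case True
      have "2 < 2 / s^2 * a" using False assms by (simp add: field_simps)
      moreover have "0 \<le> min 1 (a / r^2)" using assms by simp
      ultimately show ?thesis using True by (simp add: min_def)
    next
      case F2: False
      then have "1 < a / r^2" "1 < a / s^2" using False assms by simp_all
      then show ?thesis using F2 by simp
    qed
  qed
qed

context LD begin

definition Kn :: "real \<Rightarrow> real" where
  "Kn r = (\<integral>y. indicator (cball 0 r) y * (norm y ^ 2 * \<nu> y) \<partial>lborel)"

lemma K_eq: "K_fun \<nu> r = Kn r / r^2"
  unfolding K_fun_def Kn_def by simp

lemma h_eq: assumes "r > 0" shows "h_fun \<nu> r = (\<integral>y. D (1/r) y \<partial>lborel)"
  unfolding h_fun_def D_def using assms by (simp add: power_divide)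

lemma h_int: assumes "r > 0" shows "integrable lborel (\<lambda>y. min 1 (norm y ^ 2 / r^2) * \<nu> y)"
proof -
  have "(\<lambda>y. min 1 (norm y ^ 2 / r^2) * \<nu> y) = D (1/r)"
    unfolding D_def using assms by (auto simp: power_divide)
  then show ?thesis using D_int by simp
qed

lemma Kn_int: assumes r: "r > 0" shows "integrable lborel (\<lambda>y. indicator (cball 0 r) y * (norm y ^ 2 * \<nu> y))"
proof (rule int_dom[where C="r^2" and x="1/r"])
  have [measurable]: "(\<lambda>y::'a. norm y ^ 2) \<in> borel_measurable borel"
    by (intro borel_measurable_continuous_onI continuous_intros)
  show "(\<lambda>y. indicator (cball 0 r) y * (norm y ^ 2 * \<nu> y)) \<in> borel_measurable borel"
    by (intro borel_measurable_times borel_measurable_indicator) auto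
  fix y :: 'a
  show "\<bar>indicator (cball 0 r) y * (norm y ^ 2 * \<nu> y)\<bar> \<le> r^2 * D (1 / r) y"
  proof (cases "norm y \<le> r")
    case True
    then have "norm y ^ 2 \<le> r^2" by (simp add: power_mono)
    then have "min 1 ((1/r)^2 * norm y ^ 2) = norm y ^ 2 / r^2" using r by (simp add: power_divide field_simps)
    then show ?thesis using True r nu_nonneg[of y] unfolding D_def by (simp add: indicator_def)
  next
    case False
    then show ?thesis using D_nonneg[of "1/r" y] r by (simp add: indicator_def)
  qed
qed

lemma Kn_nonneg: "0 \<le> Kn r"
  unfolding Kn_def by (rule integral_nonneg_AE) (simp add: nu_nonneg indicator_def)

lemma H2: assumes "0 < s" "s \<le> r" shows "h_fun \<nu> s \<le> (r/s)^2 * h_fun \<nu> r"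
proof -
  have "h_fun \<nu> s \<le> (\<integral>y. (r/s)^2 * (min 1 (norm y ^ 2 / r^2) * \<nu> y) \<partial>lborel)"
    unfolding h_fun_def
  proof (rule integral_mono)
    show "integrable lborel (\<lambda>y. min 1 (norm y ^ 2 / s^2) * \<nu> y)" using h_int assms by simp
    show "integrable lborel (\<lambda>y. (r/s)^2 * (min 1 (norm y ^ 2 / r^2) * \<nu> y))" using h_int assms by simp
    fix y :: 'a
    have c: "1 \<le> (r/s)^2" using assms by (simp add: field_simps power_mono)
    have "min 1 ((r/s)^2 * (norm y ^ 2 / r^2)) \<le> max 1 ((r/s)^2) * min 1 (norm y ^ 2 / r^2)"
      by (rule min_scale) simp_all
    moreover have "(r/s)^2 * (norm y ^ 2 / r^2) = norm y ^ 2 / s^2" using assms by (simp add: field_simps)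
    ultimately have "min 1 (norm y ^ 2 / s^2) \<le> (r/s)^2 * min 1 (norm y ^ 2 / r^2)" using c by simp
    then show "min 1 (norm y ^ 2 / s^2) * \<nu> y \<le> (r/s)^2 * (min 1 (norm y ^ 2 / r^2) * \<nu> y)"
      using mult_right_mono[OF _ nu_nonneg] by (metis mult.assoc)
  qed
  then show ?thesis unfolding h_fun_def by simp
qed

lemma H3: assumes "0 < s" "s \<le> r" shows "h_fun \<nu> r + (1 - s^2/r^2) * K_fun \<nu> s \<le> h_fun \<nu> s"
proof -
  have r: "r > 0" using assms by simp
  have "(\<integral>y. min 1 (norm y ^ 2 / r^2) * \<nu> y + (1/s^2 - 1/r^2) * (indicator (cball 0 s) y * (norm y ^ 2 * \<nu> y)) \<partial>lborel)
     \<le> (\<integral>y. min 1 (norm y ^ 2 / s^2) * \<nu> y \<partial>lborel)"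
  proof (rule integral_mono)
    show "integrable lborel (\<lambda>y. min 1 (norm y ^ 2 / r^2) * \<nu> y + (1/s^2 - 1/r^2) * (indicator (cball 0 s) y * (norm y ^ 2 * \<nu> y)))"
      using h_int[OF r] Kn_int[OF assms(1)] by simp
    show "integrable lborel (\<lambda>y. min 1 (norm y ^ 2 / s^2) * \<nu> y)" using h_int assms by simp
    fix y :: 'a
    have "indicator (cball 0 s) y = (if norm y ^ 2 \<le> s^2 then 1 else (0::real))"
      using assms by (simp add: indicator_def abs_le_square_iff[symmetric])
    moreover have "min 1 (norm y ^ 2 / r^2) + (1 / s^2 - 1 / r^2) * ((if norm y ^ 2 \<le> s^2 then 1 else 0) * norm y ^ 2) \<le> min 1 (norm y ^ 2 / s^2)"
      by (rule pw_H3[OF assms]) simp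
    ultimately have "(min 1 (norm y ^ 2 / r^2) + (1 / s^2 - 1 / r^2) * (indicator (cball 0 s) y * norm y ^ 2)) * \<nu> y \<le> min 1 (norm y ^ 2 / s^2) * \<nu> y"
      by (auto intro!: mult_right_mono nu_nonneg)
    then show "min 1 (norm y ^ 2 / r^2) * \<nu> y + (1/s^2 - 1/r^2) * (indicator (cball 0 s) y * (norm y ^ 2 * \<nu> y)) \<le> min 1 (norm y ^ 2 / s^2) * \<nu> y"
      by (simp add: algebra_simps)
  qed
  also have "(\<integral>y. min 1 (norm y ^ 2 / r^2) * \<nu> y + (1/s^2 - 1/r^2) * (indicator (cball 0 s) y * (norm y ^ 2 * \<nu> y)) \<partial>lborel)
     = h_fun \<nu> r + (1/s^2 - 1/r^2) * Kn s"
    unfolding h_fun_def Kn_def using h_int[OF r] Kn_int[OF assms(1)] by simp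
  also have "(1/s^2 - 1/r^2) * Kn s = (1 - s^2/r^2) * K_fun \<nu> s"
    unfolding K_eq using assms by (simp add: field_simps)
  finally show ?thesis unfolding h_fun_def by simp
qed

lemma H4: assumes "0 < s" "s \<le> r" shows "h_fun \<nu> s \<le> h_fun \<nu> r + 2 * (r/s)^2 * K_fun \<nu> r"
proof -
  have r: "r > 0" using assms by simp
  have "h_fun \<nu> s \<le> (\<integral>y. min 1 (norm y ^ 2 / r^2) * \<nu> y + 2 / s^2 * (indicator (cball 0 r) y * (norm y ^ 2 * \<nu> y)) \<partial>lborel)"
    unfolding h_fun_def
  proof (rule integral_mono)
    show "integrable lborel (\<lambda>y. min 1 (norm y ^ 2 / r^2) * \<nu> y + 2 / s^2 * (indicator (cball 0 r) y * (norm y ^ 2 * \<nu> y)))"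
      using h_int[OF r] Kn_int[OF r] by simp
    show "integrable lborel (\<lambda>y. min 1 (norm y ^ 2 / s^2) * \<nu> y)" using h_int assms by simp
    fix y :: 'a
    have "indicator (cball 0 r) y = (if norm y ^ 2 \<le> r^2 then 1 else (0::real))"
      using r by (simp add: indicator_def)
    moreover have "min 1 (norm y ^ 2 / s^2) \<le> min 1 (norm y ^ 2 / r^2) + 2 / s^2 * ((if norm y ^ 2 \<le> r^2 then 1 else 0) * norm y ^ 2)"
      by (rule pw_H4[OF assms]) simp
    ultimately have "min 1 (norm y ^ 2 / s^2) * \<nu> y \<le> (min 1 (norm y ^ 2 / r^2) + 2 / s^2 * (indicator (cball 0 r) y * norm y ^ 2)) * \<nu> y"
      by (auto intro!: mult_right_mono nu_nonneg)
    then show "min 1 (norm y ^ 2 / s^2) * \<nu> y \<le> min 1 (norm y ^ 2 / r^2) * \<nu> y + 2 / s^2 * (indicator (cball 0 r) y * (norm y ^ 2 * \<nu> y))"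
      by (simp add: algebra_simps)
  qed
  also have "\<dots> = h_fun \<nu> r + 2 / s^2 * Kn r"
    unfolding h_fun_def Kn_def using h_int[OF r] Kn_int[OF r] by simp
  also have "2 / s^2 * Kn r = 2 * (r/s)^2 * K_fun \<nu> r"
    unfolding K_eq using assms by (simp add: field_simps)
  finally show ?thesis .
qed

end



context LD begin

lemma U: assumes "x > 0" shows "psi_radial \<nu> x \<le> 2 * h_fun \<nu> (1/x)"
  using phi_upper[of x] h_eq[of "1/x"] assms by simp

lemma L: assumes "x > 0" shows "h_fun \<nu> (1/x) \<le> (real DIM('a) * (12 * real DIM('a) + 2)) * psi_radial \<nu> x"
  using LB[OF assms] h_eq[of "1/x"] assms by simp

lemma K_nonneg: "0 \<le> K_fun \<nu> r"
  unfolding K_eq using Kn_nonneg by simp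

lemma H1: assumes "0 < s" "s \<le> r" shows "h_fun \<nu> r \<le> h_fun \<nu> s"
proof -
  have "s^2/r^2 \<le> 1" using assms by (simp add: power_mono)
  then have "0 \<le> (1 - s^2/r^2) * K_fun \<nu> s" using K_nonneg by simp
  then show ?thesis using H3[OF assms] by linarith
qed

lemma h_pos: assumes r: "r > 0" shows "0 < h_fun \<nu> r"
proof -
  obtain x0 where x0: "x0 \<noteq> 0" "\<nu> x0 > 0" using nu_pos by blast
  define \<rho> where "\<rho> = norm x0"
  have \<rho>: "\<rho> > 0" using x0 unfolding \<rho>_def by simp
  define B where "B = ball ((1/2) *\<^sub>R x0) (\<rho>/4)"
  define m where "m = min 1 ((\<rho>/4)^2 / r^2)"
  have m: "m > 0" unfolding m_def using \<rho> r by simp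
  have inB: "\<rho>/4 < norm y \<and> norm y \<le> \<rho>" if "y \<in> B" for y
  proof -
    have d: "norm (y - (1/2) *\<^sub>R x0) < \<rho>/4" using that unfolding B_def by (simp add: dist_norm norm_minus_commute)
    have "norm ((1/2) *\<^sub>R x0) = \<rho>/2" unfolding \<rho>_def by simp
    moreover have "norm ((1/2) *\<^sub>R x0) \<le> norm y + norm (y - (1/2) *\<^sub>R x0)"
      by (metis norm_triangle_sub add.commute norm_minus_commute)
    moreover have "norm y \<le> norm ((1/2) *\<^sub>R x0) + norm (y - (1/2) *\<^sub>R x0)"
      by (metis norm_triangle_sub)
    ultimately show ?thesis using d \<rho> by linarith
  qed
  have "(\<integral>y. (m * \<nu> x0) * indicator B y \<partial>lborel) \<le> (\<integral>y. min 1 (norm y ^ 2 / r^2) * \<nu> y \<partial>lborel)"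
  proof (rule integral_mono)
    show "integrable lborel (\<lambda>y. (m * \<nu> x0) * indicator B y)"
      unfolding B_def by (intro integrable_mult_right integrable_real_indicator) (use emeasure_lborel_ball_finite in \<open>auto simp: top_ennreal.rep_eq infinity_ennreal_def\<close>)
    show "integrable lborel (\<lambda>y. min 1 (norm y ^ 2 / r^2) * \<nu> y)" by (rule h_int[OF r])
    fix y :: 'a
    show "(m * \<nu> x0) * indicator B y \<le> min 1 (norm y ^ 2 / r^2) * \<nu> y"
    proof (cases "y \<in> B")
      case True
      then have y: "\<rho>/4 < norm y" "norm y \<le> \<rho>" using inB by auto
      have "\<nu> x0 \<le> \<nu> y" by (rule nu_mono) (use y \<rho> in \<open>auto simp: \<rho>_def\<close>)
      have "(\<rho>/4)^2 \<le> norm y ^ 2" using y \<rho> by (intro power_mono) auto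
      then have "(\<rho>/4)^2 / r^2 \<le> norm y ^ 2 / r^2" using r by (intro divide_right_mono) auto
      then have "m \<le> min 1 (norm y ^ 2 / r^2)" unfolding m_def by linarith
      then have "m * \<nu> x0 \<le> min 1 (norm y ^ 2 / r^2) * \<nu> y"
        using \<open>\<nu> x0 \<le> \<nu> y\<close> m x0 by (intro mult_mono) auto
      then show ?thesis using True by simp
    next
      case False
      then show ?thesis using nu_nonneg[of y] by simp
    qed
  qed
  moreover have "(\<integral>y. (m * \<nu> x0) * indicator B y \<partial>lborel) = m * \<nu> x0 * measure lborel B"
    by simp
  moreover have "measure lborel B > 0" unfolding B_def using content_ball_pos \<rho> by simp
  ultimately have "0 < (\<integral>y. min 1 (norm y ^ 2 / r^2) * \<nu> y \<partial>lborel)"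
    using m x0 by (smt (verit) mult_pos_pos)
  then show ?thesis unfolding h_fun_def by simp
qed

end



context LD begin

lemma dirA:
  assumes lim: "Liminf (at_right 0) (\<lambda>r. ereal (K_fun \<nu> r / h_fun \<nu> r)) > 0"
  shows "\<exists>c \<alpha> \<theta>. 0 < c \<and> c \<le> 1 \<and> 0 < \<alpha> \<and> 0 \<le> \<theta> \<and> WLSC (psi_radial \<nu>) \<alpha> \<theta> c"
proof -
  define C where "C = real DIM('a) * (12 * real DIM('a) + 2)"
  have C: "C \<ge> 14" unfolding C_def
  proof -
    have "1 \<le> real DIM('a)" by simp
    then have "1 * 14 \<le> real DIM('a) * (12 * real DIM('a) + 2)" by (intro mult_mono) auto
    then show "14 \<le> real DIM('a) * (12 * real DIM('a) + 2)" by simp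
  qed
  obtain z where z: "0 < ereal z" "ereal z < Liminf (at_right 0) (\<lambda>r. ereal (K_fun \<nu> r / h_fun \<nu> r))"
    using ereal_dense2[OF lim] by blast
  have "eventually (\<lambda>r. ereal z < ereal (K_fun \<nu> r / h_fun \<nu> r)) (at_right 0)"
    by (rule less_LiminfD[OF z(2)])
  then obtain \<delta> where \<delta>: "\<delta> > 0" "\<And>r. r > 0 \<Longrightarrow> r < \<delta> \<Longrightarrow> z < K_fun \<nu> r / h_fun \<nu> r"
    unfolding eventually_at_right_field by auto
  define e1 where "e1 = min z 1"
  have e1: "0 < e1" "e1 \<le> 1" using z(1) unfolding e1_def by auto
  have Kb: "e1 * h_fun \<nu> r \<le> K_fun \<nu> r" if "0 < r" "r < \<delta>" for r
  proof -
    have "z < K_fun \<nu> r / h_fun \<nu> r" using \<delta>(2) that by blast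
    then have "z * h_fun \<nu> r < K_fun \<nu> r" using h_pos[OF that(1)] by (simp add: field_simps)
    moreover have "e1 * h_fun \<nu> r \<le> z * h_fun \<nu> r"
      using h_pos[OF that(1)] unfolding e1_def by (intro mult_right_mono) auto
    ultimately show ?thesis by simp
  qed
  define p where "p = 1 - 3 * e1 / 4"
  have p: "0 < p" "p < 1" using e1 unfolding p_def by auto
  have doub: "h_fun \<nu> r \<le> p * h_fun \<nu> (r/2)" if "0 < r" "r < \<delta>" for r
  proof -
    have "h_fun \<nu> r + (1 - (r/2)^2/r^2) * K_fun \<nu> (r/2) \<le> h_fun \<nu> (r/2)"
      by (rule H3) (use that in auto)
    moreover have "(r/2)^2/r^2 = 1/4" using that by (simp add: field_simps power2_eq_square)
    moreover have "e1 * h_fun \<nu> (r/2) \<le> K_fun \<nu> (r/2)" by (rule Kb) (use that in auto)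
    ultimately show ?thesis unfolding p_def by (simp add: algebra_simps)
  qed
  have iter: "h_fun \<nu> r \<le> p^k * h_fun \<nu> (r / 2^k)" if "0 < r" "r < \<delta>" for r k
  proof (induction k)
    case 0 then show ?case by simp
  next
    case (Suc k)
    have "r / 2^k \<le> r" using that by (simp add: divide_le_eq)
    then have "h_fun \<nu> (r / 2^k) \<le> p * h_fun \<nu> (r / 2^k / 2)"
      using that by (intro doub) auto
    then have "p^k * h_fun \<nu> (r / 2^k) \<le> p^k * (p * h_fun \<nu> (r / 2^k / 2))"
      using p by (intro mult_left_mono) auto
    then show ?case using Suc by (simp add: algebra_simps)
  qed
  define \<alpha> where "\<alpha> = log 2 (1/p)"
  have \<alpha>: "0 < \<alpha>" unfolding \<alpha>_def using p by simp
  have pa: "2 powr \<alpha> = 1/p" unfolding \<alpha>_def using p by simp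
  define c where "c = p / (2 * C)"
  have c: "0 < c" "c \<le> 1" unfolding c_def using p C by auto
  have "WLSC (psi_radial \<nu>) \<alpha> (1/\<delta>) c"
    unfolding WLSC_def
  proof (intro allI impI)
    fix t x :: real assume t: "t > 1" and x: "x > 1/\<delta>"
    have "0 < 1/\<delta>" using \<delta> by simp
    then have x0: "x > 0" using x by linarith
    define r where "r = 1/x"
    have r: "0 < r" "r < \<delta>" unfolding r_def using x x0 \<delta> by (auto simp: field_simps)
    obtain m where m: "t < 2^m" using real_arch_pow[of 2 t] by auto
    define k where "k = (LEAST k. t < 2^(Suc k))"
    have "(2::real)^m \<le> 2 * 2^m" by simp
    then have "t < 2^(Suc m)" using m by (simp only: power_Suc)
    then have ex: "\<exists>k. t < 2^(Suc k)" by blast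
    have k1: "t < 2^(Suc k)" unfolding k_def using LeastI_ex[OF ex] .
    have k2: "2^k \<le> t"
    proof (cases k)
      case 0 then show ?thesis using t by simp
    next
      case (Suc j)
      have "\<not> t < 2^(Suc j)" using not_less_Least[of j "\<lambda>k. t < 2^(Suc k)"] Suc unfolding k_def by simp
      then show ?thesis using Suc by simp
    qed
    have tx: "t * x > 0" using t x0 by simp
    have A1: "psi_radial \<nu> x \<le> 2 * h_fun \<nu> r" using U[OF x0] unfolding r_def .
    have A2: "h_fun \<nu> r \<le> p^k * h_fun \<nu> (r / 2^k)" by (rule iter[OF r])
    have "r / t \<le> r / 2^k" using r k2 t by (intro divide_left_mono) auto
    then have A3: "h_fun \<nu> (r / 2^k) \<le> h_fun \<nu> (r / t)" using r t by (intro H1) auto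
    have A4: "h_fun \<nu> (r / t) \<le> C * psi_radial \<nu> (t * x)"
    proof -
      have "r / t = 1 / (t * x)" unfolding r_def by simp
      then show ?thesis using L[OF tx] unfolding C_def by simp
    qed
    have P: "0 < p^k" using p by simp
    have "psi_radial \<nu> x \<le> 2 * h_fun \<nu> r" by (rule A1)
    also have "\<dots> \<le> 2 * (p^k * h_fun \<nu> (r / 2^k))" using A2 by simp
    also have "\<dots> \<le> 2 * (p^k * h_fun \<nu> (r / t))" using A3 P by (intro mult_left_mono) auto
    also have "\<dots> \<le> 2 * (p^k * (C * psi_radial \<nu> (t * x)))" using A4 P by (intro mult_left_mono) auto
    finally have "psi_radial \<nu> x \<le> 2 * (p^k * (C * psi_radial \<nu> (t * x)))" .
    then have B: "psi_radial \<nu> x / (2 * C * p^k) \<le> psi_radial \<nu> (t * x)"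
      using P C by (simp add: field_simps)
    have "t powr \<alpha> \<le> (2^(Suc k)) powr \<alpha>" using t k1 \<alpha> by (intro powr_mono2) auto
    also have "(2^(Suc k)) powr \<alpha> = (2 powr \<alpha>) ^ (Suc k)"
    proof -
      have "(2::real)^(Suc k) = 2 powr real (Suc k)" by (rule powr_realpow[symmetric]) simp
      then have "(2^(Suc k)) powr \<alpha> = 2 powr (real (Suc k) * \<alpha>)" by (simp add: powr_powr)
      also have "\<dots> = (2 powr \<alpha>) powr real (Suc k)" by (simp add: powr_powr mult.commute)
      also have "\<dots> = (2 powr \<alpha>) ^ (Suc k)" by (rule powr_realpow) simp
      finally show ?thesis .
    qed
    also have "\<dots> = (1/p)^(Suc k)" using pa by simp
    finally have E: "t powr \<alpha> \<le> 1 / (p * p^k)" by (simp add: power_one_over)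
    have "c * t powr \<alpha> * psi_radial \<nu> x \<le> c * (1 / (p * p^k)) * psi_radial \<nu> x"
      using E c phi_nonneg[of x] by (intro mult_right_mono mult_left_mono) auto
    also have "\<dots> = psi_radial \<nu> x / (2 * C * p^k)" unfolding c_def using p C by (simp add: field_simps)
    finally show "c * t powr \<alpha> * psi_radial \<nu> x \<le> psi_radial \<nu> (t * x)" using B by linarith
  qed
  moreover have "0 \<le> 1/\<delta>" using \<delta> by simp
  ultimately show ?thesis using c \<alpha> by blast
qed

end



context LD begin

lemma dirB:
  assumes "0 < c" "0 < \<alpha>" "0 \<le> \<theta>" and W: "WLSC (psi_radial \<nu>) \<alpha> \<theta> c"
  shows "Liminf (at_right 0) (\<lambda>r. ereal (K_fun \<nu> r / h_fun \<nu> r)) > 0"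
proof -
  define C where "C = real DIM('a) * (12 * real DIM('a) + 2)"
  have C: "C > 0" unfolding C_def by simp
  define lam where "lam = max 2 ((4 * C / c) powr (1/\<alpha>))"
  have lam1: "lam > 1" unfolding lam_def by simp
  have "(4 * C / c) powr (1/\<alpha>) \<le> lam" unfolding lam_def by simp
  then have "((4 * C / c) powr (1/\<alpha>)) powr \<alpha> \<le> lam powr \<alpha>"
    using assms by (intro powr_mono2) auto
  moreover have "((4 * C / c) powr (1/\<alpha>)) powr \<alpha> = 4 * C / c"
    using assms C by (simp add: powr_powr)
  ultimately have "4 * C / c \<le> lam powr \<alpha>" by simp
  then have "c * (4 * C / c) \<le> c * lam powr \<alpha>" using assms by (intro mult_left_mono) auto
  then have la: "4 * C \<le> c * lam powr \<alpha>" using assms by simp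
  define \<epsilon> where "\<epsilon> = 1 / (2 * lam^2)"
  have \<epsilon>: "\<epsilon> > 0" unfolding \<epsilon>_def using lam1 by simp
  have ev: "eventually (\<lambda>r. ereal \<epsilon> \<le> ereal (K_fun \<nu> r / h_fun \<nu> r)) (at_right 0)"
    unfolding eventually_at_right_field
  proof (intro exI[of _ "1 / (\<theta> + 1)"] conjI allI impI)
    show "0 < 1 / (\<theta> + 1)" using assms by simp
    fix r :: real assume r: "0 < r" "r < 1 / (\<theta> + 1)"
    have x: "1/r > \<theta>" using r assms by (simp add: field_simps)
    have x0: "1/r > 0" using r by simp
    have hpos: "0 < h_fun \<nu> r" by (rule h_pos[OF r(1)])
    have lr: "lam / r > 0" using r lam1 by simp
    have a1: "psi_radial \<nu> (lam / r) \<le> 2 * h_fun \<nu> (r / lam)"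
      using U[OF lr] by simp
    have a2: "c * lam powr \<alpha> * psi_radial \<nu> (1/r) \<le> psi_radial \<nu> (lam * (1/r))"
      using W lam1 x unfolding WLSC_def by blast
    have a3: "h_fun \<nu> r \<le> C * psi_radial \<nu> (1/r)"
      using L[OF x0] unfolding C_def by simp
    have "4 * C * h_fun \<nu> r \<le> c * lam powr \<alpha> * h_fun \<nu> r"
      using la hpos by (intro mult_right_mono) auto
    also have "\<dots> \<le> c * lam powr \<alpha> * (C * psi_radial \<nu> (1/r))"
      using a3 assms by (intro mult_left_mono) auto
    also have "\<dots> = C * (c * lam powr \<alpha> * psi_radial \<nu> (1/r))" by simp
    also have "\<dots> \<le> C * psi_radial \<nu> (lam / r)" using a2 C by (intro mult_left_mono) auto
    also have "\<dots> \<le> C * (2 * h_fun \<nu> (r / lam))" using a1 C by (intro mult_left_mono) auto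
    finally have b1: "2 * h_fun \<nu> r \<le> h_fun \<nu> (r / lam)" using C by simp
    have "r / lam \<le> r" using r lam1 by (simp add: field_simps)
    then have b2: "h_fun \<nu> (r / lam) \<le> h_fun \<nu> r + 2 * (r / (r / lam))^2 * K_fun \<nu> r"
      using r lam1 by (intro H4) auto
    have "r / (r / lam) = lam" using r by simp
    then have "h_fun \<nu> r \<le> 2 * lam^2 * K_fun \<nu> r" using b1 b2 by simp
    then have "\<epsilon> \<le> K_fun \<nu> r / h_fun \<nu> r"
      unfolding \<epsilon>_def using hpos lam1 by (simp add: field_simps)
    then show "ereal \<epsilon> \<le> ereal (K_fun \<nu> r / h_fun \<nu> r)" by simp
  qed
  have "ereal \<epsilon> \<le> Liminf (at_right 0) (\<lambda>r. ereal (K_fun \<nu> r / h_fun \<nu> r))"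
    by (rule Liminf_bounded[OF ev])
  then show ?thesis using \<epsilon> by (meson ereal_less(2) less_le_trans zero_less_iff_neq_zero)
qed

lemma dirC:
  assumes lim: "Liminf (at_right 0) (\<lambda>r. ereal (K_fun \<nu> r / h_fun \<nu> r)) > 0"
  shows "\<not> slowly_varying_at_infinity (psi_radial \<nu>)"
proof
  assume sv: "slowly_varying_at_infinity (psi_radial \<nu>)"
  obtain c \<alpha> \<theta> where W: "0 < c" "c \<le> 1" "0 < \<alpha>" "0 \<le> \<theta>" "WLSC (psi_radial \<nu>) \<alpha> \<theta> c"
    using dirA[OF lim] by blast
  define T where "T = max 2 ((2 / c) powr (1/\<alpha>))"
  have T1: "T > 1" unfolding T_def by simp
  have "(2 / c) powr (1/\<alpha>) \<le> T" unfolding T_def by simp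
  then have "((2 / c) powr (1/\<alpha>)) powr \<alpha> \<le> T powr \<alpha>"
    using W by (intro powr_mono2) auto
  moreover have "((2 / c) powr (1/\<alpha>)) powr \<alpha> = 2 / c"
    using W by (simp add: powr_powr)
  ultimately have "2 / c \<le> T powr \<alpha>" by simp
  then have "c * (2 / c) \<le> c * T powr \<alpha>" using W by (intro mult_left_mono) auto
  then have Ta: "2 \<le> c * T powr \<alpha>" using W by simp
  have "((\<lambda>x. psi_radial \<nu> (T * x) / psi_radial \<nu> x) \<longlongrightarrow> 1) at_top"
    using sv T1 unfolding slowly_varying_at_infinity_def by simp
  then have e1: "eventually (\<lambda>x. psi_radial \<nu> (T * x) / psi_radial \<nu> x < 3/2) at_top"
    by (rule order_tendstoD) simp
  have e2: "eventually (\<lambda>x. x > \<theta>) at_top" by (rule eventually_gt_at_top)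
  have "eventually (\<lambda>x. psi_radial \<nu> (T * x) / psi_radial \<nu> x < 3/2 \<and> x > \<theta>) at_top"
    using e1 e2 by (rule eventually_conj)
  then obtain N where N: "\<And>x. x \<ge> N \<Longrightarrow> psi_radial \<nu> (T * x) / psi_radial \<nu> x < 3/2 \<and> x > \<theta>"
    unfolding eventually_at_top_linorder by blast
  show False
  proof -
    define x where "x = N"
    have elim: "psi_radial \<nu> (T * x) / psi_radial \<nu> x < 3/2" "x > \<theta>" using N[of x] unfolding x_def by auto
    have x0: "x > 0" using elim W by linarith
    have h0: "0 < h_fun \<nu> (1/x)" using h_pos x0 by simp
    have hL: "h_fun \<nu> (1/x) \<le> real DIM('a) * (12 * real DIM('a) + 2) * psi_radial \<nu> x" by (rule L[OF x0])
    have Cp: "0 < real DIM('a) * (12 * real DIM('a) + 2)" by simp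
    have "0 < real DIM('a) * (12 * real DIM('a) + 2) * psi_radial \<nu> x" using h0 hL by linarith
    then have p: "0 < psi_radial \<nu> x" using Cp by (simp add: zero_less_mult_iff)
    have "c * T powr \<alpha> * psi_radial \<nu> x \<le> psi_radial \<nu> (T * x)"
      using W(5) T1 elim unfolding WLSC_def by blast
    moreover have "2 * psi_radial \<nu> x \<le> c * T powr \<alpha> * psi_radial \<nu> x"
      using Ta p by (intro mult_right_mono) auto
    ultimately have "2 * psi_radial \<nu> x \<le> psi_radial \<nu> (T * x)" by linarith
    then have "2 \<le> psi_radial \<nu> (T * x) / psi_radial \<nu> x" using p by (simp add: pos_le_divide_eq)
    then show False using elim by simp
  qed
qed

end

theorem mainTheorem13:
  fixes \<nu> :: "'a::euclidean_space \<Rightarrow> real"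
  assumes "isotropic_unimodal_levy_density \<nu>"
  shows "((\<exists>c \<alpha> \<theta>. 0 < c \<and> c \<le> 1 \<and> 0 < \<alpha> \<and> 0 \<le> \<theta> \<and> WLSC (psi_radial \<nu>) \<alpha> \<theta> c)
           \<longleftrightarrow> Liminf (at_right 0) (\<lambda>r. ereal (K_fun \<nu> r / h_fun \<nu> r)) > 0)
         \<and> (Liminf (at_right 0) (\<lambda>r. ereal (K_fun \<nu> r / h_fun \<nu> r)) > 0
              \<longrightarrow> \<not> slowly_varying_at_infinity (psi_radial \<nu>))"
proof -
  interpret LD \<nu> by (rule LD.intro) (rule assms)
  show ?thesis using dirA dirB dirC by blast
qed


end
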